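(* Let $k$ be an algebraically closed field of characteristic $p>0$. Let $e_1\ge e_2$ be positive integers with $e=e_1+e_2$, $p\nmid(e-1)(e_1-1)(e_2-1)$, and let $pw$ be the smallest multiple of $p$ that is $\ge e_1$. Suppose $\lfloor\frac{e-1}{p}\rfloor>\lfloor\frac{e_1-1}{p}\rfloor+\lfloor\frac{e_2-1}{p}\rfloor$. Then there exists a rational function $G(x,t)\in\operatorname{Frac}(k[x,t])$ whose partial fraction decomposition in $k(t)(x)$ has the form $$G(x,t)=\sum_{i=1}^{e_1-1}\frac{a_i}{x^i}+\frac{a_{pw}}{x^{pw}}+\sum_{j=1}^{e_2-1}\frac{b_j}{(x-t)^j}$$ with all $a_i,b_j\in k(t)$ and $a_{pw},a_{e_1-1},b_{e_2-1}\neq0$, such that $G(x,0)\in\operatorname{Frac}(k[x])$ has exactly one pole, of order $e-1$, at $x=0$. *)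

theory Defs
  imports "HOL-Computational_Algebra.Computational_Algebra"
begin

text \<open>k(t) is modelled as 'a poly fract; k(t)(x) = Frac(k[x,t]) as ('a poly fract) poly fract;
  k[t][x] = k[x,t] as 'a poly poly (outer variable x, coefficients in k[t]); k(x) as 'a poly fract.\<close>

definition xvar :: "'b::field poly fract" where
  "xvar = to_fract [:0, 1:]"

definition tvar :: "'a::field poly fract" where
  "tvar = to_fract [:0, 1:]"

definition constK :: "'b::field \<Rightarrow> 'b poly fract" where
  "constK c = to_fract [:c:]"

definition embed_xt :: "'a::field poly poly \<Rightarrow> 'a poly fract poly fract" where
  "embed_xt N = to_fract (map_poly to_fract N)"

definition spec_t0 :: "'a::field poly poly \<Rightarrow> 'a poly" where
  "spec_t0 N = map_poly (\<lambda>c. poly c 0) N"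

text \<open>G(x,0) = R: G can be written N/D with N, D in k[x,t], D(x,0) \<noteq> 0, and R = N(x,0)/D(x,0).\<close>
definition specializes_to :: "'a::field poly fract poly fract \<Rightarrow> 'a poly fract \<Rightarrow> bool" where
  "specializes_to G R \<longleftrightarrow> (\<exists>N D. D \<noteq> 0 \<and> spec_t0 D \<noteq> 0 \<and> G = embed_xt N / embed_xt D
      \<and> R = Fract (spec_t0 N) (spec_t0 D))"

text \<open>R \<in> k(x) has exactly one pole on the projective line, at x = 0, of order m:
  R = P / x^m with P(0) \<noteq> 0 and deg P \<le> m (no pole at infinity).\<close>
definition single_pole_at_0 :: "'a::field poly fract \<Rightarrow> nat \<Rightarrow> bool" where
  "single_pole_at_0 R m \<longleftrightarrow> m > 0 \<and> (\<exists>P. poly P 0 \<noteq> 0 \<and> degree P \<le> m \<and> R = Fract P ([:0, 1:] ^ m))"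

end

theory Submission
  imports Defs
begin


lemma taylor_pf:
  fixes W :: "'k::field poly" and c :: 'k
  assumes "degree W < Suc n"
  shows "\<exists>\<beta>. to_fract W / (to_fract [:-c,1:])^(Suc n) =
      (\<Sum>j=1..Suc n. to_fract [:\<beta> j:] / (to_fract [:-c,1:])^j) \<and> \<beta> (Suc n) = poly W c"
  using assms
proof (induction n arbitrary: W)
  case 0
  then obtain w where "W = [:w:]"
    by (metis degree_0_id less_Suc0)
  then show ?case by (intro exI[of _ "\<lambda>_. w"]) simp
next
  case (Suc n)
  define W' where "W' = synthetic_div W c"
  have dW': "degree W' < Suc n" using Suc.prems by (simp add: W'_def degree_synthetic_div)
  obtain \<beta>' where b': "to_fract W' / (to_fract [:-c,1:])^(Suc n) =
      (\<Sum>j=1..Suc n. to_fract [:\<beta>' j:] / (to_fract [:-c,1:])^j)"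
    using Suc.IH[OF dW'] by blast
  have Weq: "W = [:-c, 1:] * W' + [:poly W c:]" unfolding W'_def by (rule synthetic_div_correct'[symmetric])
  define L where "L = to_fract [:-c,1::'k:]"
  have L0: "L \<noteq> 0" by (simp add: L_def)
  have "to_fract W / L^(Suc (Suc n)) = to_fract W' / L^(Suc n) + to_fract [:poly W c:] / L^(Suc (Suc n))"
  proof -
    have tW: "to_fract W = L * to_fract W' + to_fract [:poly W c:]"
      using arg_cong[OF Weq, of to_fract] by (simp only: to_fract_add to_fract_mult L_def)
    show ?thesis unfolding tW using L0 by (simp add: field_simps)
  qed
  also have "\<dots> = (\<Sum>j=1..Suc (Suc n). to_fract [:(\<beta>'(Suc (Suc n) := poly W c)) j:] / L^j)"
    using b' by (simp add: L_def)
  finally show ?case unfolding L_def by (intro exI[of _ "\<beta>'(Suc (Suc n) := poly W c)"]) simp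
qed

lemma to_fract_power: "to_fract (x ^ n) = to_fract x ^ n"
  by (induction n) simp_all

lemma two_pole_gen:
  fixes s :: "'k::field"
  assumes s: "s \<noteq> 0"
  shows "degree W < a + Suc n \<Longrightarrow> \<exists>\<alpha> \<beta>. to_fract W / (to_fract [:0,1:]^a * to_fract [:-s,1:]^(Suc n)) =
     (\<Sum>i=1..a. to_fract [:\<alpha> i:] / to_fract [:0,1:]^i)
     + (\<Sum>j=1..Suc n. to_fract [:\<beta> j:] / to_fract [:-s,1:]^j)
     \<and> \<beta> (Suc n) * s^a = poly W s \<and> (a > 0 \<longrightarrow> \<alpha> a * (-s)^(Suc n) = poly W 0)"
proof (induction a arbitrary: W)
  case 0
  then show ?case using taylor_pf[of W n s] by auto
next
  case (Suc a)
  define B where "B = [:-s,1::'k:]^(Suc n)"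
  define c where "c = poly W 0 / (-s)^(Suc n)"
  define W1 where "W1 = synthetic_div (W - smult c B) 0"
  have B0: "poly B 0 = (-s)^(Suc n)" by (simp add: B_def)
  have Bs: "poly B s = 0" by (simp add: B_def)
  have dB: "degree B = Suc n" unfolding B_def by (subst degree_power_eq) auto
  have p0: "poly (W - smult c B) 0 = 0" using s by (simp add: B0 c_def)
  have Weq: "W - smult c B = [:0,1:] * W1"
    using synthetic_div_correct'[of 0 "W - smult c B"] p0 by (simp add: W1_def)
  have "degree (W - smult c B) \<le> a + Suc n"
    using Suc.prems dB by (intro degree_diff_le) (auto intro: order.trans[OF degree_smult_le])
  then have dW1: "degree W1 < a + Suc n" unfolding W1_def degree_synthetic_div by simp
  obtain \<alpha> \<beta> where IH: "to_fract W1 / (to_fract [:0,1:]^a * to_fract [:-s,1:]^(Suc n)) =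
     (\<Sum>i=1..a. to_fract [:\<alpha> i:] / to_fract [:0,1:]^i)
     + (\<Sum>j=1..Suc n. to_fract [:\<beta> j:] / to_fract [:-s,1:]^j)" and
     bt: "\<beta> (Suc n) * s^a = poly W1 s"
    using Suc.IH[OF dW1] by blast
  define X where "X = to_fract [:0,1::'k:]"
  define L where "L = to_fract [:-s,1::'k:]"
  have X0: "X \<noteq> 0" and L0: "L \<noteq> 0" by (simp_all add: X_def L_def)
  have tW: "to_fract W = to_fract [:c:] * L^(Suc n) + X * to_fract W1"
  proof -
    have "W = smult c B + [:0,1:] * W1" using Weq by (simp add: algebra_simps)
    also have "smult c B = [:c:] * B" by simp
    finally have "to_fract W = to_fract ([:c:] * B + [:0,1:] * W1)" by simp
    then show ?thesis by (simp only: to_fract_add to_fract_mult B_def to_fract_power X_def L_def)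
  qed
  have "to_fract W / (X^(Suc a) * L^(Suc n)) = to_fract [:c:] / X^(Suc a) + to_fract W1 / (X^a * L^(Suc n))"
    unfolding tW using X0 L0 by (simp add: field_simps)
  also have "\<dots> = (\<Sum>i=1..Suc a. to_fract [:(\<alpha>(Suc a := c)) i:] / X^i)
     + (\<Sum>j=1..Suc n. to_fract [:\<beta> j:] / L^j)"
    using IH by (simp add: X_def L_def)
  finally have eq: "to_fract W / (X^(Suc a) * L^(Suc n)) = (\<Sum>i=1..Suc a. to_fract [:(\<alpha>(Suc a := c)) i:] / X^i)
     + (\<Sum>j=1..Suc n. to_fract [:\<beta> j:] / L^j)" .
  have "poly W s = s * poly W1 s"
    using arg_cong[OF Weq, of "\<lambda>p. poly p s"] Bs by simp
  then have "\<beta> (Suc n) * s^(Suc a) = poly W s" using bt by (simp add: algebra_simps)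
  moreover have "c * (-s)^(Suc n) = poly W 0" using s by (simp add: c_def)
  ultimately show ?case using eq unfolding X_def L_def
    by (intro exI[of _ "\<alpha>(Suc a := c)"] exI[of _ \<beta>]) simp
qed



lemma alt_choose_sum:
  "(\<Sum>k\<le>m. (-1)^k * of_nat (Suc n choose k)) = ((-1)^m * of_nat (n choose m) :: 'a::comm_ring_1)"
  by (induction m) (simp_all add: algebra_simps)

lemma const_pow: "[:s:]^m = [:s^m:]"
  by (induction m) (simp_all add: mult.commute)

lemma smult_sum_right: "smult c (\<Sum>i\<in>S. f i) = (\<Sum>i\<in>S. smult c (f i))"
  by (induct S rule: infinite_finite_induct) (auto simp: smult_add_right)

lemma lin_binom:
  fixes s :: "'k::field"
  shows "[:s,-1:]^n = (\<Sum>k\<le>n. monom ((-1)^k * of_nat (n choose k) * s^(n-k)) k)"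
proof -
  have "[:s,-1:] = monom (-1) 1 + [:s:]" by (simp add: monom_Suc monom_0)
  then have "[:s,-1:]^n = (\<Sum>k\<le>n. of_nat (n choose k) * monom (-1) 1 ^ k * [:s:] ^ (n-k))"
    by (simp add: binomial_ring)
  also have "\<dots> = (\<Sum>k\<le>n. monom ((-1)^k * of_nat (n choose k) * s^(n-k)) k)"
  proof (rule sum.cong[OF refl])
    fix k
    have "[:s:]^(n-k) = [:s^(n-k):]" by (rule const_pow)
    moreover have "monom (-1::'k) 1 ^ k = monom ((-1)^k) k" by (simp only: monom_power mult_1)
    ultimately show "of_nat (n choose k) * monom (-1) 1 ^ k * [:s:] ^ (n-k) = monom ((-1)^k * of_nat (n choose k) * s^(n-k)) k"
      by (simp add: of_nat_poly smult_monom algebra_simps)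
  qed
  finally show ?thesis .
qed

definition Nk :: "'k::field \<Rightarrow> nat \<Rightarrow> nat \<Rightarrow> 'k poly" where
  "Nk s n d = (\<Sum>k\<le>d. monom ((-1)^k * of_nat (n choose k) * s^(d-k)) k)"

definition Wk :: "'k::field \<Rightarrow> nat \<Rightarrow> nat \<Rightarrow> 'k poly" where
  "Wk s n d = (\<Sum>k=Suc d..n. monom ((-1)^k * of_nat (n choose k) * s^(n-k)) (k - Suc d))"

lemma F_split:
  fixes s :: "'k::field"
  assumes "d < n"
  shows "[:s,-1:]^n = smult (s^(n-d)) (Nk s n d) + monom 1 (Suc d) * Wk s n d"
proof -
  define f where "f k = monom ((-1)^k * of_nat (n choose k) * s^(n-k)) k" for k
  have "[:s,-1:]^n = sum f {0..d + (n-d)}" using assms by (simp add: lin_binom f_def atLeast0AtMost)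
  also have "\<dots> = sum f {0..d} + sum f {d+1..d+(n-d)}" by (rule sum.ub_add_nat) simp
  also have "sum f {0..d} = smult (s^(n-d)) (Nk s n d)"
    unfolding Nk_def smult_sum_right atLeast0AtMost
  proof (rule sum.cong[OF refl])
    fix k assume "k \<in> {..d}"
    then have "s^(n-k) = s^(n-d) * s^(d-k)" using assms by (simp add: power_add[symmetric])
    then show "f k = smult (s ^ (n - d)) (monom ((- 1) ^ k * of_nat (n choose k) * s ^ (d - k)) k)"
      by (simp add: f_def smult_monom algebra_simps)
  qed
  also have "sum f {d+1..d+(n-d)} = monom 1 (Suc d) * Wk s n d"
    unfolding Wk_def sum_distrib_left
  proof (rule sum.cong)
    show "{d+1..d+(n-d)} = {Suc d..n}" using assms by simp
  next
    fix k assume "k \<in> {Suc d..n}"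
    then show "f k = monom 1 (Suc d) * monom ((- 1) ^ k * of_nat (n choose k) * s ^ (n - k)) (k - Suc d)"
      by (simp add: f_def mult_monom)
  qed
  finally show ?thesis .
qed


lemma poly_Nk:
  fixes s :: "'k::field"
  shows "poly (Nk s (Suc n) d) s = s^d * ((-1)^d * of_nat (n choose d))"
proof -
  have "poly (Nk s (Suc n) d) s = (\<Sum>k\<le>d. s^d * ((-1)^k * of_nat (Suc n choose k)))"
    unfolding Nk_def poly_sum poly_monom
  proof (rule sum.cong[OF refl])
    fix k assume "k \<in> {..d}"
    then have "s^(d-k) * s^k = s^d" by (simp add: power_add[symmetric])
    then show "(- 1) ^ k * of_nat (Suc n choose k) * s ^ (d - k) * s ^ k = s ^ d * ((- 1) ^ k * of_nat (Suc n choose k))"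
      by (simp add: algebra_simps)
  qed
  also have "\<dots> = s^d * ((-1)^d * of_nat (n choose d))"
    by (simp add: sum_distrib_left[symmetric] alt_choose_sum)
  finally show ?thesis .
qed

lemma poly_Wk0:
  fixes s :: "'k::field"
  assumes "d < n"
  shows "poly (Wk s n d) 0 = (-1)^(Suc d) * of_nat (n choose Suc d) * s^(n - Suc d)"
proof -
  have "poly (Wk s n d) 0 = (\<Sum>k\<in>{Suc d..n}. if k = Suc d then (-1)^(Suc d) * of_nat (n choose Suc d) * s^(n - Suc d) else 0)"
    unfolding Wk_def poly_sum poly_monom by (rule sum.cong) auto
  also have "\<dots> = (-1)^(Suc d) * of_nat (n choose Suc d) * s^(n - Suc d)"
    using assms by (subst sum.delta) auto
  finally show ?thesis .
qed

lemma degree_Wk: "degree (Wk s n d) \<le> n"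
  unfolding Wk_def by (rule degree_sum_le) (auto intro: order.trans[OF degree_monom_le])

lemma main_K:
  fixes s :: "'k::field"
  assumes s: "s \<noteq> 0" and dn: "d < Suc n"
    and C1: "of_nat (Suc n choose Suc d) \<noteq> (0::'k)" and C2: "of_nat (n choose d) \<noteq> (0::'k)"
  shows "\<exists>\<alpha> apw \<beta>. to_fract (Nk s (Suc n) d) / (to_fract [:0,1:]^(Suc a + Suc d) * to_fract [:-s,1:]^(Suc n)) =
     (\<Sum>i=1..Suc a. to_fract [:\<alpha> i:] / to_fract [:0,1:]^i)
     + to_fract [:apw:] / to_fract [:0,1:]^(Suc a + Suc d)
     + (\<Sum>j=1..Suc n. to_fract [:\<beta> j:] / to_fract [:-s,1:]^j)
     \<and> apw \<noteq> 0 \<and> \<alpha> (Suc a) \<noteq> 0 \<and> \<beta> (Suc n) \<noteq> 0"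
proof -
  define c where "c = s^(Suc n - d)"
  have c0: "c \<noteq> 0" using s by (simp add: c_def)
  define W where "W = Wk s (Suc n) d"
  define W' where "W' = smult (-(1/c)) W"
  define N where "N = Nk s (Suc n) d"
  define apw where "apw = (-1)^(Suc n) / c"
  have Fs: "[:s,-1:]^(Suc n) = smult c N + monom 1 (Suc d) * W"
    unfolding c_def N_def W_def by (rule F_split[OF dn])
  have lin: "[:s,-1:]^(Suc n) = [:(-1)^(Suc n):] * [:-s,1:]^(Suc n)"
  proof -
    have "[:s,-1:] = [:-1:] * [:-s,1::'k:]" by simp
    then show ?thesis by (simp only: power_mult_distrib const_pow)
  qed
  have WW': "W = [:-c:] * W'" using c0 by (simp add: W'_def)
  have pid: "[:c:] * N = [:apw:] * [:c:] * [:-s,1:]^(Suc n) + [:c:] * [:0,1:]^(Suc d) * W'"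
  proof -
    have h1: "[:apw:] * [:c:] = [:(-1)^(Suc n):]" using c0 by (simp add: apw_def)
    have h2: "monom 1 (Suc d) = [:0,1::'k:]^(Suc d)" by (simp add: monom_altdef)
    have h3: "smult c N = [:c:] * N" by simp
    have h4: "[:-c:] = - [:c:]" by simp
    have hyp: "[:apw:] * [:c:] * [:-s,1:]^(Suc n) = [:c:] * N + [:0,1:]^(Suc d) * (- [:c:] * W')"
      using Fs unfolding lin h1[symmetric] h2 h3 WW' h4 .
    have gen: "\<And>A Bc NN P Xd V :: 'k poly. A * P = Bc * NN + Xd * (- Bc * V) \<Longrightarrow> Bc * NN = A * P + Bc * Xd * V"
      by (simp add: algebra_simps)
    show ?thesis using gen[OF hyp] .
  qed
  have dW': "degree W' < Suc a + Suc n"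
    using degree_Wk[of s "Suc n" d] by (simp add: W'_def W_def)
  obtain \<alpha> \<beta> where pf: "to_fract W' / (to_fract [:0,1:]^(Suc a) * to_fract [:-s,1:]^(Suc n)) =
     (\<Sum>i=1..Suc a. to_fract [:\<alpha> i:] / to_fract [:0,1:]^i)
     + (\<Sum>j=1..Suc n. to_fract [:\<beta> j:] / to_fract [:-s,1:]^j)"
     and bt: "\<beta> (Suc n) * s^(Suc a) = poly W' s" and at: "\<alpha> (Suc a) * (-s)^(Suc n) = poly W' 0"
    using two_pole_gen[OF s dW'] by auto
  define X where "X = to_fract [:0,1::'k:]"
  define L where "L = to_fract [:-s,1::'k:]"
  define C where "C = to_fract [:c:]"
  have X0: "X \<noteq> 0" and L0: "L \<noteq> 0" and C0: "C \<noteq> 0" using c0 by (simp_all add: X_def L_def C_def)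
  have tid: "C * to_fract N = to_fract [:apw:] * C * L^(Suc n) + C * X^(Suc d) * to_fract W'"
    using arg_cong[OF pid, of to_fract] by (simp only: to_fract_add to_fract_mult to_fract_power X_def L_def C_def)
  have tN: "to_fract N = to_fract [:apw:] * L^(Suc n) + X^(Suc d) * to_fract W'"
  proof -
    have "C * to_fract N = C * (to_fract [:apw:] * L^(Suc n) + X^(Suc d) * to_fract W')"
      unfolding tid by (simp add: algebra_simps)
    then show ?thesis using C0 by simp
  qed
  have eq: "to_fract N / (X^(Suc a + Suc d) * L^(Suc n)) = to_fract [:apw:] / X^(Suc a + Suc d)
      + to_fract W' / (X^(Suc a) * L^(Suc n))"
    unfolding tN using X0 L0 by (simp add: field_simps power_add)
  have "apw \<noteq> 0" using c0 by (simp add: apw_def)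
  moreover have "\<alpha> (Suc a) \<noteq> 0"
  proof
    assume "\<alpha> (Suc a) = 0"
    then have "poly W 0 = 0" using at c0 by (simp add: W'_def)
    then show False using poly_Wk0[OF dn, of s] C1 s by (simp add: W_def)
  qed
  moreover have "\<beta> (Suc n) \<noteq> 0"
  proof
    assume "\<beta> (Suc n) = 0"
    then have "poly W s = 0" using bt c0 by (simp add: W'_def)
    moreover have "poly ([:s,-1:]^(Suc n)) s = 0" by simp
    ultimately have "c * poly N s = 0" using arg_cong[OF Fs, of "\<lambda>p. poly p s"] by simp
    then show False using c0 s C2 by (simp add: N_def poly_Nk)
  qed
  ultimately show ?thesis using eq pf unfolding X_def L_def N_def
    by (intro exI[of _ \<alpha>] exI[of _ apw] exI[of _ \<beta>]) (simp add: add.assoc add.commute add.left_commute)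
qed

lemma binom_ndvd:
  fixes p m :: nat
  assumes p: "prime p" and j: "j \<le> m mod p"
  shows "\<not> p dvd (m choose j)"
  using j
proof (induction j)
  case 0 then show ?case using p by (metis One_nat_def binomial_n_0 dvd_1_iff_1 not_prime_1)
next
  case (Suc j)
  have IH: "\<not> p dvd (m choose j)" using Suc by simp
  have jm: "j < m mod p" using Suc.prems by simp
  have "\<not> p dvd (m - j)"
  proof
    assume "p dvd (m - j)"
    have "m mod p \<le> m" by simp
    then have "j \<le> m" using jm by linarith
    have "m - j = (m mod p - j) + (m div p) * p" using jm div_mult_mod_eq[of m p] by linarith
    then have "(m - j) mod p = (m mod p - j) mod p" using p by (metis mod_mult_self1)
    also have "\<dots> = m mod p - j" using p prime_gt_0_nat by (intro mod_less) (simp add: less_imp_diff_less)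
    finally have "(m - j) mod p = (m mod p - j)" .
    with \<open>p dvd (m - j)\<close> jm show False by (simp add: dvd_eq_mod_eq_0)
  qed
  then have "\<not> p dvd ((m - j) * (m choose j))" using IH p prime_dvd_multD by blast
  moreover have "(m - j) * (m choose j) = Suc j * (m choose Suc j)"
    using binomial_absorb_comp[of m j] times_binomial_minus1_eq[of "Suc j" m] by simp
  ultimately show ?case by auto
qed

lemma arith_facts:
  fixes p e1 e2 :: nat
  assumes p: "prime p" and e: "e1 > 0" "e2 > 0"
    and nd: "\<not> p dvd ((e1 + e2 - 1) * (e1 - 1) * (e2 - 1))"
    and fl: "(e1 + e2 - 1) div p > (e1 - 1) div p + (e2 - 1) div p"
  shows "\<exists>d. (LEAST m. p dvd m \<and> e1 \<le> m) = e1 + d \<and> Suc d < e2 \<and> e1 \<ge> 2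
     \<and> \<not> p dvd ((e2 - 1) choose Suc d) \<and> \<not> p dvd ((e2 - 2) choose d) \<and> \<not> p dvd ((e2 - 1) choose d)"
proof -
  define A where "A = e1 - 1"
  define B where "B = e2 - 1"
  have p1: "p > 1" using p prime_gt_1_nat by blast
  have nA: "\<not> p dvd A" and nB: "\<not> p dvd B" and nAB': "\<not> p dvd (e1 + e2 - 1)"
    using nd unfolding A_def B_def by (meson dvd_mult dvd_mult2)+
  have "A + B + 1 = e1 + e2 - 1" using e by (simp add: A_def B_def)
  with nAB' have nAB: "\<not> p dvd (A + B + 1)" by simp
  have rA: "A mod p \<ge> 1" using nA by (simp add: dvd_eq_mod_eq_0)
  have rB: "B mod p \<ge> 1" using nB by (simp add: dvd_eq_mod_eq_0)
  have eAB: "e1 + e2 - 1 = A + B + 1" using e by (simp add: A_def B_def)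
  have decomp: "A + B + 1 = (A div p + B div p) * p + (A mod p + B mod p + 1)"
    by (simp add: algebra_simps)
  have ge: "A mod p + B mod p + 1 \<ge> p"
  proof (rule ccontr)
    assume "\<not> ?thesis"
    then have lt: "A mod p + B mod p + 1 < p" by simp
    have "(A + B + 1) div p = ((A mod p + B mod p + 1) + (A div p + B div p) * p) div p"
      using decomp by (simp add: add.commute)
    also have "\<dots> = (A div p + B div p) + (A mod p + B mod p + 1) div p"
      using p1 by (intro div_mult_self1) simp
    also have "(A mod p + B mod p + 1) div p = 0" using lt by (rule div_less)
    finally have "(A + B + 1) div p = A div p + B div p" by simp
    moreover have "(A+B+1) div p > A div p + B div p" using fl unfolding eAB A_def[symmetric] B_def[symmetric] .
    ultimately show False by simp
  qed
  have "A mod p + B mod p + 1 \<noteq> p"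
  proof
    assume h: "A mod p + B mod p + 1 = p"
    from decomp have "A + B + 1 = p * (A div p + B div p + 1)" using h by simp
    then show False using nAB by (metis dvd_triv_left)
  qed
  with ge have sum: "A mod p + B mod p \<ge> p" by simp
  define q where "q = A div p"
  define d where "d = p - 1 - A mod p"
  have Aeq: "A = q * p + A mod p" by (simp add: q_def)
  have Amp: "A mod p < p" using p1 by simp
  have least: "(LEAST m. p dvd m \<and> e1 \<le> m) = (q + 1) * p"
  proof (rule Least_equality)
    show "p dvd (q + 1) * p \<and> e1 \<le> (q + 1) * p"
      using Aeq Amp e by (auto simp: A_def algebra_simps)
  next
    fix m assume m: "p dvd m \<and> e1 \<le> m"
    then obtain k where k: "m = p * k" by blast
    have "q * p \<le> A" using Aeq by linarith
    moreover have "A < e1" using e by (simp add: A_def)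
    moreover have "e1 \<le> k * p" using m k by (simp add: mult.commute)
    ultimately have "q * p < k * p" by linarith
    then have "q < k" by simp
    then have "q + 1 \<le> k" by simp
    then have "(q + 1) * p \<le> k * p" by (rule mult_right_mono) simp
    then show "(q + 1) * p \<le> m" using k by (simp add: mult.commute)
  qed
  have pwe: "(q + 1) * p = e1 + d"
    using Aeq Amp e by (simp add: d_def A_def algebra_simps)
  have dB: "Suc d \<le> B mod p" using sum Amp by (simp add: d_def)
  have Bmp: "B mod p \<le> B" by simp
  have c1: "\<not> p dvd (B choose Suc d)" by (rule binom_ndvd[OF p dB])
  have c3: "\<not> p dvd (B choose d)" using dB by (intro binom_ndvd[OF p]) simp
  have "(B - 1) mod p = B mod p - 1"
  proof -
    obtain B' where B': "B = Suc B'" using rB by (cases B) auto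
    show ?thesis using rB mod_Suc[of B' p] unfolding B' by (auto split: if_splits)
  qed
  then have c2: "\<not> p dvd ((B - 1) choose d)" using dB by (intro binom_ndvd[OF p]) simp
  have "e1 \<ge> 2" using rA by (cases "A = 0") (auto simp: A_def)
  moreover have "Suc d < e2" using dB Bmp e unfolding B_def by linarith
  moreover have "B - 1 = e2 - 2" by (simp add: B_def)
  ultimately show ?thesis using least pwe c1 c2 c3 unfolding B_def
    by (intro exI[of _ d]) simp
qed

lemma spec_add: "spec_t0 (p + q) = spec_t0 p + spec_t0 q"
  by (rule poly_eqI) (simp add: spec_t0_def coeff_map_poly)

lemma spec_mult: "spec_t0 (p * q) = spec_t0 p * spec_t0 q"
  by (rule poly_eqI) (simp add: spec_t0_def coeff_map_poly coeff_mult poly_sum)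

lemma spec_0: "spec_t0 0 = 0" by (simp add: spec_t0_def)
lemma spec_1: "spec_t0 1 = 1" by (simp add: spec_t0_def)

lemma spec_power: "spec_t0 (p ^ n) = spec_t0 p ^ n"
  by (induction n) (simp_all add: spec_mult spec_1)

lemma spec_sum: "spec_t0 (sum f A) = (\<Sum>x\<in>A. spec_t0 (f x))"
  by (induct A rule: infinite_finite_induct) (simp_all add: spec_add spec_0)

lemma fract_poly_sum: "fract_poly (sum f A) = (\<Sum>x\<in>A. fract_poly (f x))"
  by (induct A rule: infinite_finite_induct) simp_all

lemma fract_poly_power: "fract_poly (p ^ n) = fract_poly p ^ n"
  by (induction n) simp_all

lemma to_fract_of_nat: "to_fract (of_nat m) = of_nat m"
  by (induction m) simp_all

lemma of_nat_fract_poly_eq_0: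
  "(of_nat m :: 'a::field poly fract) = 0 \<longleftrightarrow> (of_nat m :: 'a) = 0"
proof -
  have "(of_nat m :: 'a poly fract) = to_fract [:of_nat m:]"
    by (simp add: to_fract_of_nat[symmetric] of_nat_poly)
  then show ?thesis by simp
qed

theorem proposition5p5:
  fixes e1 e2 :: nat
  assumes charp: "CHAR('a::alg_closed_field) > 0"
    and e_pos: "e1 > 0" "e2 > 0" and e_ord: "e1 \<ge> e2"
    and ndvd: "\<not> CHAR('a) dvd ((e1 + e2 - 1) * (e1 - 1) * (e2 - 1))"
    and floors: "(e1 + e2 - 1) div CHAR('a) > (e1 - 1) div CHAR('a) + (e2 - 1) div CHAR('a)"
  shows "\<exists>(G :: 'a poly fract poly fract) (a :: nat \<Rightarrow> 'a poly fract) (apw :: 'a poly fract)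
            (b :: nat \<Rightarrow> 'a poly fract) (R :: 'a poly fract).
     (let pw = (LEAST m. CHAR('a) dvd m \<and> e1 \<le> m) in
        G = (\<Sum>i = 1..e1 - 1. constK (a i) / xvar ^ i) + constK apw / xvar ^ pw
            + (\<Sum>j = 1..e2 - 1. constK (b j) / (xvar - constK tvar) ^ j))
     \<and> apw \<noteq> 0 \<and> a (e1 - 1) \<noteq> 0 \<and> b (e2 - 1) \<noteq> 0
     \<and> specializes_to G R \<and> single_pole_at_0 R (e1 + e2 - 1)"
proof -
  define p where "p = CHAR('a)"
  have pp: "prime p" unfolding p_def using charp prime_CHAR_semidom by blast
  obtain d where pw: "(LEAST m. p dvd m \<and> e1 \<le> m) = e1 + d" and de2: "Suc d < e2" and e12: "e1 \<ge> 2"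
    and C1: "\<not> p dvd ((e2 - 1) choose Suc d)" and C2: "\<not> p dvd ((e2 - 2) choose d)"
    and C3: "\<not> p dvd ((e2 - 1) choose d)"
    using arith_facts[OF pp e_pos ndvd[folded p_def] floors[folded p_def]] by blast
  obtain a' where a': "e1 - 1 = Suc a'" using e12 by (cases "e1 - 1") auto
  obtain n' where n': "e2 - 1 = Suc n'" using de2 by (cases "e2 - 1") auto
  have n'2: "e2 - 2 = n'" using n' by simp
  have pwe: "e1 + d = Suc a' + Suc d" using a' by simp
  have s: "(tvar :: 'a poly fract) \<noteq> 0" by (simp add: tvar_def)
  have dn: "d < Suc n'" using de2 n' by simp
  have K1: "of_nat (Suc n' choose Suc d) \<noteq> (0 :: 'a poly fract)"
    using C1 n' by (simp add: of_nat_fract_poly_eq_0 of_nat_eq_0_iff_char_dvd p_def del: binomial_Suc_Suc)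
  have K2: "of_nat (n' choose d) \<noteq> (0 :: 'a poly fract)"
    using C2 n'2 by (simp add: of_nat_fract_poly_eq_0 of_nat_eq_0_iff_char_dvd p_def)
  obtain \<alpha> apw \<beta> where mk:
    "to_fract (Nk (tvar :: 'a poly fract) (Suc n') d) / (to_fract [:0,1:]^(Suc a' + Suc d) * to_fract [:-tvar,1:]^(Suc n')) =
     (\<Sum>i=1..Suc a'. to_fract [:\<alpha> i:] / to_fract [:0,1:]^i)
     + to_fract [:apw:] / to_fract [:0,1:]^(Suc a' + Suc d)
     + (\<Sum>j=1..Suc n'. to_fract [:\<beta> j:] / to_fract [:-tvar,1:]^j)"
    and nz: "apw \<noteq> 0" "\<alpha> (Suc a') \<noteq> 0" "\<beta> (Suc n') \<noteq> 0"
    using main_K[OF s dn K1 K2, of a'] by blast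
  define T where "T = [:0, 1::'a:]"
  define N :: "'a poly poly" where "N = (\<Sum>k\<le>d. monom ((-1)^k * of_nat (Suc n' choose k) * T^(d-k)) k)"
  define D :: "'a poly poly" where "D = [:0,1:]^(Suc a' + Suc d) * [:-T,1:]^(Suc n')"
  have fN: "fract_poly N = Nk tvar (Suc n') d"
    unfolding N_def Nk_def fract_poly_sum
    by (rule sum.cong[OF refl]) (simp add: map_poly_monom to_fract_power to_fract_of_nat tvar_def T_def)
  have fD: "fract_poly D = [:0,1:]^(Suc a' + Suc d) * [:-tvar,1:]^(Suc n')"
  proof -
    have h1: "fract_poly [:0,1::'a poly:] = [:0,1:]" by (simp add: map_poly_pCons)
    have h2: "fract_poly [:-T,1:] = [:-tvar,1:]" by (simp add: tvar_def T_def map_poly_pCons to_fract_uminus[symmetric])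
    show ?thesis unfolding D_def by (simp only: fract_poly_mult fract_poly_power h1 h2)
  qed
  define G where "G = embed_xt N / embed_xt D"
  have Geq: "G = to_fract (Nk tvar (Suc n') d) / (to_fract [:0,1:]^(Suc a' + Suc d) * to_fract [:-tvar,1:]^(Suc n'))"
    unfolding G_def embed_xt_def fN fD to_fract_mult to_fract_power ..
  have xv: "xvar - constK tvar = to_fract [:-tvar, 1:]"
    by (simp add: xvar_def constK_def to_fract_diff[symmetric])
  have G_form: "G = (\<Sum>i = 1..e1 - 1. constK (\<alpha> i) / xvar ^ i) + constK apw / xvar ^ (e1 + d)
            + (\<Sum>j = 1..e2 - 1. constK (\<beta> j) / (xvar - constK tvar) ^ j)"
    unfolding Geq mk xv a' n' pwe by (simp add: constK_def xvar_def)
  define c where "c = ((-1)^d * of_nat (Suc n' choose d) :: 'a)"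
  have c0: "c \<noteq> 0" using C3 n' by (simp add: c_def of_nat_eq_0_iff_char_dvd p_def)
  have sD: "spec_t0 D = [:0,1:]^(Suc a' + Suc d + Suc n')"
  proof -
    have g1: "spec_t0 [:0,1::'a poly:] = [:0,1:]" by (simp add: spec_t0_def map_poly_pCons)
    have g2: "spec_t0 [:-T,1:] = [:0,1:]" by (simp add: spec_t0_def map_poly_pCons T_def)
    show ?thesis unfolding D_def spec_mult spec_power g1 g2 by (simp only: power_add)
  qed
  have sN: "spec_t0 N = monom c d"
  proof -
    have "spec_t0 N = (\<Sum>k\<le>d. if k = d then monom c d else 0)"
      unfolding N_def spec_sum
      by (rule sum.cong[OF refl]) (auto simp: spec_t0_def map_poly_monom T_def c_def)
    also have "\<dots> = monom c d" by (subst sum.delta) auto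
    finally show ?thesis .
  qed
  have sD0: "spec_t0 D \<noteq> 0" unfolding sD by simp
  have D0: "D \<noteq> 0" using sD0 by (auto simp: spec_t0_def)
  define R where "R = Fract (spec_t0 N) (spec_t0 D)"
  have spec: "specializes_to G R"
    unfolding specializes_to_def using D0 sD0 by (auto simp: G_def R_def)
  have single: "single_pole_at_0 R (e1 + e2 - 1)"
    unfolding single_pole_at_0_def
  proof (intro conjI exI)
    show "0 < e1 + e2 - 1" using e_pos by simp
    show "poly [:c:] 0 \<noteq> 0" using c0 by simp
    show "degree [:c:] \<le> e1 + e2 - 1" by simp
    have m: "Suc a' + Suc d + Suc n' = d + (e1 + e2 - 1)" using a' n' e_pos by simp
    show "R = Fract [:c:] ([:0, 1:] ^ (e1 + e2 - 1))"
      unfolding R_def sN sD m using c0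
      by (subst eq_fract) (simp_all add: monom_altdef power_add algebra_simps)
  qed
  show ?thesis
    using G_form nz spec single a' n' pw unfolding p_def Let_def
    by (intro exI[of _ G] exI[of _ \<alpha>] exI[of _ apw] exI[of _ \<beta>] exI[of _ R]) simp
qed

end
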